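(* Let $\mathbb{K}$ be a field of characteristic $0$, let $F(n)$ be a holonomic sequence of order $J>0$, and let $L=\sum_{i=0}^{J}a_i(n)\sigma^i\in\operatorname{ann}F(n)$ with $a_0(n)a_J(n)\ne0$. Suppose $\gcd(a_0(n),a_J(n+h))=1$ for every $h\in\mathbb{N}=\{0,1,2,\dots\}$ and $L$ is nondegenerated. If $p(n)\in\mathbb{K}[n]$ is a nonzero polynomial such that $p(n)F(n)$ is summable, then \[\deg p(n)\ge \deg L + C_L.\]
   Context: $\sigma$ is the shift operator, $L(F(n))=\sum_i a_i(n)F(n+i)$, $\operatorname{ann}F(n)=\{L\in\mathbb{K}[n][\sigma]:L(F(n))=0\}$, $F$ holonomic means $\operatorname{ann}F\neq\{0\}$, and the order of $F$ is the minimal order of a nonzero element of $\operatorname{ann}F$. A holonomic sequence $G(n)$ of order $J$ is summable if $G(n)=\Delta\big(\sum_{i=0}^{J-1}u_i(n)G(n+i)\big)$ for some $u_i(n)\in\mathbb{K}(n)$, with $\Delta=\sigma-1$. Adjoint: $L^*(x(n))=\sum_{i=0}^J a_i(n-i)x(n-i)$. Put $b_k(n)=\sum_{j=k}^{J}\binom{j}{k}a_{J-j}(n+j-J)$, $d=\deg L=\max_{0\le k\le J}\{\deg b_k(n)-k\}$, $f(s)=\sum_{k=0}^{J}[n^{d+k}](b_k(n))\,s^{\underline{k}}$ (coefficient of $n^{d+k}$ in $b_k$ times the falling factorial $s(s-1)\cdots(s-k+1)$), and $R_L=\{s\in\mathbb{N}:f(s)=0\}$; $L$ is nondegenerated if $R_L=\emptyset$.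 Continued zero index $C_L$: if $L^*(1)\neq0$ then $C_L=0$; otherwise $C_L$ is the positive integer with $L^*(n^{C_L})\neq 0$ and $L^*(n^i)=0$ for $0\le i\le C_L-1$. *)

theory Defs
  imports "HOL-Computational_Algebra.Polynomial"
begin

text \<open>A recurrence operator L = sum_{i=0}^J a_i(n) sigma^i is represented by its
  order bound J and the coefficient function a :: nat => 'a poly (only a 0..a J matter).
  Sequences are functions nat => 'a; equalities of sequences are understood for all
  sufficiently large n (sequences modulo finitely many terms).\<close>

definition apply_op :: "nat \<Rightarrow> (nat \<Rightarrow> 'a::comm_ring_1 poly) \<Rightarrow> (nat \<Rightarrow> 'a) \<Rightarrow> nat \<Rightarrow> 'a" where
  "apply_op J a F n = (\<Sum>i\<le>J. poly (a i) (of_nat n) * F (n + i))"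

definition annihilates :: "nat \<Rightarrow> (nat \<Rightarrow> 'a::comm_ring_1 poly) \<Rightarrow> (nat \<Rightarrow> 'a) \<Rightarrow> bool" where
  "annihilates J a F \<longleftrightarrow> (\<forall>\<^sub>F n in sequentially. apply_op J a F n = 0)"

definition has_ann_of_order :: "(nat \<Rightarrow> 'a::comm_ring_1) \<Rightarrow> nat \<Rightarrow> bool" where
  "has_ann_of_order F m \<longleftrightarrow> (\<exists>a. a m \<noteq> 0 \<and> annihilates m a F)"

definition holonomic :: "(nat \<Rightarrow> 'a::comm_ring_1) \<Rightarrow> bool" where
  "holonomic F \<longleftrightarrow> (\<exists>m. has_ann_of_order F m)"

definition hol_order :: "(nat \<Rightarrow> 'a::comm_ring_1) \<Rightarrow> nat" where
  "hol_order F = (LEAST m. has_ann_of_order F m)"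

text \<open>Summability: G(n) = Delta(sum_{i<J} u_i(n) G(n+i)) with rational functions
  u_i = un i / ud i (ud i nonzero), J the order of G; equality for large n.\<close>
definition summable_seq :: "(nat \<Rightarrow> 'a::field) \<Rightarrow> bool" where
  "summable_seq G \<longleftrightarrow> holonomic G \<and>
     (\<exists>un ud :: nat \<Rightarrow> 'a poly. (\<forall>i<hol_order G. ud i \<noteq> 0) \<and>
        (let T = (\<lambda>n. \<Sum>i<hol_order G. poly (un i) (of_nat n) / poly (ud i) (of_nat n) * G (n + i))
         in \<forall>\<^sub>F n in sequentially. G n = T (Suc n) - T n))"

definition bcoef :: "nat \<Rightarrow> (nat \<Rightarrow> 'a::comm_ring_1 poly) \<Rightarrow> nat \<Rightarrow> 'a poly" where
  "bcoef J a k = (\<Sum>j=k..J. smult (of_nat (j choose k))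
       (pcompose (a (J - j)) [:of_int (int j - int J), 1:]))"

definition deg_op :: "nat \<Rightarrow> (nat \<Rightarrow> 'a::comm_ring_1 poly) \<Rightarrow> int" where
  "deg_op J a = Max {int (degree (bcoef J a k)) - int k | k. k \<le> J \<and> bcoef J a k \<noteq> 0}"

definition falling :: "'a::comm_ring_1 \<Rightarrow> nat \<Rightarrow> 'a" where
  "falling s k = (\<Prod>i<k. s - of_nat i)"

definition indicial :: "nat \<Rightarrow> (nat \<Rightarrow> 'a::comm_ring_1 poly) \<Rightarrow> 'a \<Rightarrow> 'a" where
  "indicial J a s = (\<Sum>k\<le>J. (if deg_op J a + int k \<ge> 0
        then coeff (bcoef J a k) (nat (deg_op J a + int k)) else 0) * falling s k)"

definition nondegenerated :: "nat \<Rightarrow> (nat \<Rightarrow> 'a::comm_ring_1 poly) \<Rightarrow> bool" where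
  "nondegenerated J a \<longleftrightarrow> {s::nat. indicial J a (of_nat s) = 0} = {}"

text \<open>Adjoint applied to n^c, as a polynomial: sum_i a_i(n-i) (n-i)^c.\<close>
definition adjoint_pow :: "nat \<Rightarrow> (nat \<Rightarrow> 'a::comm_ring_1 poly) \<Rightarrow> nat \<Rightarrow> 'a poly" where
  "adjoint_pow J a c = (\<Sum>i\<le>J. pcompose (a i) [:- of_nat i, 1:] * [:- of_nat i, 1:] ^ c)"

definition cont_zero_index :: "nat \<Rightarrow> (nat \<Rightarrow> 'a::comm_ring_1 poly) \<Rightarrow> nat" where
  "cont_zero_index J a = (LEAST c. adjoint_pow J a c \<noteq> 0)"

end

theory Submission
  imports Defs "HOL-Computational_Algebra.Polynomial_Factorial"
begin

lemma falling_0_Suc: "falling (0::'a::comm_ring_1) (Suc k) = 0"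
  unfolding falling_def by (simp only: prod.lessThan_Suc_shift) simp

lemma bcoef0_eq_adjoint: "bcoef J a 0 = adjoint_pow J a 0"
proof -
  have "bcoef J a 0 = (\<Sum>j=0..J. pcompose (a (J - j)) [:of_int (int j - int J), 1:])"
    unfolding bcoef_def by simp
  also have "\<dots> = (\<Sum>j=0..J. pcompose (a (J - (J + 0 - j))) [:of_int (int (J + 0 - j) - int J), 1:])"
    by (rule sum.atLeastAtMost_rev)
  also have "\<dots> = (\<Sum>i\<le>J. pcompose (a i) [:- of_nat i, 1:])"
    by (rule sum.cong) (auto simp: of_nat_diff)
  finally show ?thesis unfolding adjoint_pow_def by simp
qed

lemma indicial_0: "indicial J a 0 = (if deg_op J a \<ge> 0 then coeff (bcoef J a 0) (nat (deg_op J a)) else 0)"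
proof -
  have "indicial J a 0 = (\<Sum>k\<in>{0}. (if deg_op J a + int k \<ge> 0
        then coeff (bcoef J a k) (nat (deg_op J a + int k)) else 0) * falling 0 k)"
    unfolding indicial_def
    by (rule sum.mono_neutral_right) (auto simp: falling_0_Suc gr0_conv_Suc)
  then show ?thesis by (simp add: falling_def)
qed

lemma cont_zero_index_0:
  assumes "nondegenerated J a"
  shows "cont_zero_index J a = 0"
proof -
  have "indicial J a (of_nat 0) \<noteq> 0" using assms unfolding nondegenerated_def by blast
  then have "bcoef J a 0 \<noteq> 0" by (auto simp: indicial_0 split: if_splits)
  then have "adjoint_pow J a 0 \<noteq> 0" by (simp add: bcoef0_eq_adjoint)
  then show ?thesis unfolding cont_zero_index_def by (rule Least_eq_0)
qed


definition shiftp :: "'a::comm_ring_1 poly \<Rightarrow> 'a \<Rightarrow> 'a poly" where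
  "shiftp w c = pcompose w [:c, 1:]"


lemma poly_shiftp [simp]: "poly (shiftp w c) x = poly w (x + c)"
  by (simp add: shiftp_def poly_pcompose add.commute)

lemma poly_ext_eq: "(\<And>x. poly p x = poly q x) \<Longrightarrow> p = (q :: 'a::field_char_0 poly)"
  using poly_eq_poly_eq_iff by blast

lemma shiftp_shiftp: "shiftp (shiftp w a) b = shiftp (w :: 'a::field_char_0 poly) (a + b)"
  by (rule poly_ext_eq) (simp add: ac_simps)

lemma shiftp_0 [simp]: "shiftp w 0 = w"
  by (simp add: shiftp_def)

lemma shiftp_const [simp]: "shiftp [:c:] x = [:c:]"
  by (simp add: shiftp_def)

lemma shiftp_zero [simp]: "shiftp 0 c = 0"
  by (simp add: shiftp_def)

lemma shiftp_mult: "shiftp (p * q) c = shiftp p c * shiftp q c"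
  by (simp add: shiftp_def pcompose_mult)

lemma shiftp_add: "shiftp (p + q) c = shiftp p c + shiftp q c"
  by (simp add: shiftp_def pcompose_add)

lemma shiftp_diff: "shiftp (p - q) c = shiftp p c - shiftp q c"
  by (simp add: shiftp_def pcompose_diff)

lemma shiftp_uminus: "shiftp (- p) c = - shiftp p c"
  by (simp add: shiftp_def pcompose_uminus)

lemma shiftp_smult: "shiftp (smult a p) c = smult a (shiftp p c)"
  by (simp add: shiftp_def pcompose_smult)

lemma shiftp_sum: "shiftp (sum f A) c = (\<Sum>i\<in>A. shiftp (f i) c)"
  by (simp add: shiftp_def pcompose_sum)

lemma shiftp_prod: "shiftp (prod f A) c = (\<Prod>i\<in>A. shiftp (f i) c)"
  by (simp add: shiftp_def pcompose_prod)

lemma degree_shiftp [simp]: "degree (shiftp (w :: 'a::idom poly) c) = degree w"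
  by (simp add: shiftp_def degree_pcompose)

lemma lead_coeff_shiftp [simp]: "lead_coeff (shiftp (w :: 'a::idom poly) c) = lead_coeff w"
  by (simp add: shiftp_def lead_coeff_comp)

lemma shiftp_eq_0_iff [simp]: "shiftp (w :: 'a::idom poly) c = 0 \<longleftrightarrow> w = 0"
  by (simp add: shiftp_def pcompose_eq_0_iff)

lemma shiftp_dvd: "f dvd g \<Longrightarrow> shiftp f c dvd shiftp g c"
  by (auto simp: dvd_def shiftp_mult)

lemma shiftp_dvd_iff: "shiftp f c dvd shiftp g c \<longleftrightarrow> f dvd (g :: 'a::field_char_0 poly)"
proof
  assume "shiftp f c dvd shiftp g c"
  then have "shiftp (shiftp f c) (-c) dvd shiftp (shiftp g c) (-c)" by (rule shiftp_dvd)
  then show "f dvd g" by (simp add: shiftp_shiftp)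
qed (rule shiftp_dvd)

lemma shiftp_unit: "is_unit (shiftp f c) \<longleftrightarrow> is_unit (f :: 'a::field_char_0 poly)"
  by (cases "f = 0") (auto simp: is_unit_iff_degree)

lemma prime_elem_shiftp:
  assumes "prime_elem (q :: 'a::field_char_0 poly)"
  shows "prime_elem (shiftp q c)"
proof -
  have "shiftp q c \<noteq> 0" "\<not> is_unit (shiftp q c)"
    using assms by (auto simp: prime_elem_def shiftp_unit)
  moreover have "shiftp q c dvd x \<or> shiftp q c dvd y" if "shiftp q c dvd x * y" for x y
  proof -
    have "shiftp (shiftp q c) (-c) dvd shiftp (x * y) (-c)" using that by (rule shiftp_dvd)
    then have "q dvd shiftp x (-c) * shiftp y (-c)" by (simp add: shiftp_shiftp shiftp_mult)
    then have "q dvd shiftp x (-c) \<or> q dvd shiftp y (-c)"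
      using assms by (simp add: prime_elem_dvd_mult_iff)
    then show ?thesis
      by (metis add.right_inverse shiftp_0 shiftp_dvd_iff shiftp_shiftp)
  qed
  ultimately show ?thesis by (auto simp: prime_elem_def)
qed

lemma pcompose_monom': "pcompose (monom a i) q = smult a (q ^ i)" for q :: "'a::field_char_0 poly"
  by (rule poly_ext_eq) (simp add: poly_pcompose poly_monom)

lemma coeff_shiftp:
  fixes w :: "'a::field_char_0 poly"
  assumes "degree w \<le> t"
  shows "coeff (shiftp w c) m = (\<Sum>i\<le>t. coeff w i * (if m \<le> i then of_nat (i choose m) * c ^ (i - m) else 0))"
proof -
  have "shiftp w c = (\<Sum>i\<le>t. smult (coeff w i) ([:c, 1:] ^ i))"
    by (subst (1) poly_as_sum_of_monoms'[OF assms, symmetric])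
       (simp add: shiftp_def pcompose_sum pcompose_monom')
  then have "coeff (shiftp w c) m = (\<Sum>i\<le>t. coeff w i * coeff ([:c, 1:] ^ i) m)"
    by (simp add: coeff_sum)
  also have "\<dots> = (\<Sum>i\<le>t. coeff w i * (if m \<le> i then of_nat (i choose m) * c ^ (i - m) else 0))"
  proof (rule sum.cong[OF refl])
    fix i assume "i \<in> {..t}"
    show "coeff w i * coeff ([:c, 1:] ^ i) m = coeff w i * (if m \<le> i then of_nat (i choose m) * c ^ (i - m) else 0)"
    proof (cases "m \<le> i")
      case True then show ?thesis by (simp add: coeff_linear_poly_power)
    next
      case False
      have "degree ([:c, 1:] ^ i) \<le> i"
        by (metis degree_linear_power order_refl)
      with False show ?thesis by (simp add: coeff_eq_0)
    qed
  qed
  finally show ?thesis .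
qed


definition dlt :: "'a::comm_ring_1 poly \<Rightarrow> 'a poly" where
  "dlt w = shiftp w 1 - w"

lemma poly_dlt: "poly (dlt w) y = poly w (y + 1) - poly w y"
  by (simp add: dlt_def)

lemma dlt_0 [simp]: "dlt 0 = 0"
  by (simp add: dlt_def)

lemma dlt_coeff:
  fixes w :: "'a::field_char_0 poly"
  assumes "degree w \<le> Suc t"
  shows "degree (dlt w) \<le> t \<and> coeff (dlt w) t = of_nat (Suc t) * coeff w (Suc t)"
proof -
  have cs: "coeff (shiftp w 1) m = (\<Sum>i\<le>Suc t. coeff w i * (if m \<le> i then of_nat (i choose m) else 0))" for m
    using coeff_shiftp[OF assms, of 1 m] by (simp only: power_one mult_1_right)
  have hi: "coeff (dlt w) m = 0" if "m > t" for m
  proof -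
    have "coeff (shiftp w 1) m = coeff w (Suc t) * (if m \<le> Suc t then 1 else 0)"
      using that by (cases "m = Suc t") (simp_all add: cs sum.atMost_Suc)
    moreover have "m > Suc t \<Longrightarrow> coeff w m = 0" using assms by (simp add: coeff_eq_0)
    ultimately show ?thesis using that by (cases "m = Suc t") (auto simp: dlt_def)
  qed
  have "coeff (shiftp w 1) t = (\<Sum>i<t. coeff w i * (if t \<le> i then of_nat (i choose t) else 0))
          + coeff w t + coeff w (Suc t) * of_nat (Suc t)"
    unfolding cs by (simp add: sum.atMost_Suc lessThan_Suc_atMost[symmetric])
  also have "(\<Sum>i<t. coeff w i * (if t \<le> i then of_nat (i choose t) else 0)) = 0"
    by (rule sum.neutral) auto
  finally have "coeff (dlt w) t = of_nat (Suc t) * coeff w (Suc t)"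
    by (simp add: dlt_def mult.commute)
  with hi show ?thesis by (auto intro: degree_le)
qed

lemma dlt_const:
  fixes w :: "'a::field_char_0 poly"
  assumes "degree w = 0" shows "dlt w = 0"
proof -
  obtain c where "w = [:c:]" using assms by (metis degree_eq_zeroE)
  then show ?thesis by (simp add: dlt_def)
qed

lemma dlt_pow:
  fixes Z :: "'a::field_char_0 poly"
  assumes "k \<le> degree Z"
  shows "degree ((dlt ^^ k) Z) \<le> degree Z - k \<and>
         coeff ((dlt ^^ k) Z) (degree Z - k) = (\<Prod>i<k. of_nat (degree Z - i)) * lead_coeff Z"
  using assms
proof (induction k)
  case 0 then show ?case by simp
next
  case (Suc k)
  define s where "s = degree Z"
  have IH: "degree ((dlt ^^ k) Z) \<le> Suc (s - Suc k)"
     "coeff ((dlt ^^ k) Z) (Suc (s - Suc k)) = (\<Prod>i<k. of_nat (s - i)) * lead_coeff Z"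
    using Suc by (auto simp: s_def Suc_diff_Suc)
  from dlt_coeff[OF IH(1)] IH(2) show ?case
    using Suc.prems by (simp add: s_def[symmetric] Suc_diff_Suc mult_ac of_nat_diff)
qed

lemma dlt_pow_zero:
  fixes Z :: "'a::field_char_0 poly"
  assumes "k > degree Z"
  shows "(dlt ^^ k) Z = 0"
  using assms
proof (induction k)
  case 0 then show ?case by simp
next
  case (Suc k)
  show ?case
  proof (cases "k = degree Z")
    case True
    then have "degree ((dlt ^^ k) Z) = 0" using dlt_pow[of k Z] by simp
    then show ?thesis by (simp add: dlt_const)
  next
    case False then show ?thesis using Suc by simp
  qed
qed

lemma pascal_sum:
  fixes f :: "nat \<Rightarrow> 'a::comm_ring_1"
  shows "(\<Sum>k\<le>j. of_nat (j choose k) * (f (Suc k) + f k)) = (\<Sum>k\<le>Suc j. of_nat (Suc j choose k) * f k)"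
proof -
  have e1: "(\<Sum>k\<le>Suc j. of_nat (Suc j choose k) * f k) = f 0 + (\<Sum>k\<le>j. of_nat (Suc j choose Suc k) * f (Suc k))"
    by (subst sum.atMost_Suc_shift) simp
  have e2: "(\<Sum>k\<le>j. of_nat (Suc j choose Suc k) * f (Suc k)) = (\<Sum>k\<le>j. of_nat (j choose k) * f (Suc k)) + (\<Sum>k\<le>j. of_nat (j choose Suc k) * f (Suc k))"
    by (simp add: sum.distrib algebra_simps)
  have e3: "(\<Sum>k\<le>j. of_nat (j choose Suc k) * f (Suc k)) = (\<Sum>k<j. of_nat (j choose Suc k) * f (Suc k))"
    by (simp add: lessThan_Suc_atMost[symmetric] binomial_eq_0)
  have e4: "(\<Sum>k\<le>j. of_nat (j choose k) * f k) = f 0 + (\<Sum>k<j. of_nat (j choose Suc k) * f (Suc k))"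
    by (subst sum.atMost_shift) simp
  have e5: "(\<Sum>k\<le>j. of_nat (j choose k) * (f (Suc k) + f k)) = (\<Sum>k\<le>j. of_nat (j choose k) * f (Suc k)) + (\<Sum>k\<le>j. of_nat (j choose k) * f k)"
    by (simp add: sum.distrib algebra_simps)
  show ?thesis unfolding e5 e1 e2 e3 e4 by (simp add: ac_simps)
qed

lemma newton:
  fixes Z :: "'a::field_char_0 poly"
  shows "poly Z (y + of_nat j) = (\<Sum>k\<le>j. of_nat (j choose k) * poly ((dlt ^^ k) Z) y)"
proof (induction j arbitrary: y)
  case 0 then show ?case by simp
next
  case (Suc j)
  have "poly Z (y + of_nat (Suc j)) = poly Z ((y + 1) + of_nat j)" by (simp add: ac_simps)
  also have "\<dots> = (\<Sum>k\<le>j. of_nat (j choose k) * poly ((dlt ^^ k) Z) (y + 1))" by (rule Suc)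
  also have "\<dots> = (\<Sum>k\<le>j. of_nat (j choose k) * (poly ((dlt ^^ Suc k) Z) y + poly ((dlt ^^ k) Z) y))"
    by (simp add: poly_dlt)
  also have "\<dots> = (\<Sum>k\<le>Suc j. of_nat (Suc j choose k) * poly ((dlt ^^ k) Z) y)"
    by (rule pascal_sum[where f = "\<lambda>k. poly ((dlt ^^ k) Z) y"])
  finally show ?case .
qed


lemma coeff_mult_bound:
  fixes f g :: "'a::comm_semiring_1 poly"
  assumes "degree f \<le> m" "degree g \<le> n"
  shows "coeff (f * g) (m + n) = coeff f m * coeff g n"
proof -
  have "coeff (f * g) (m + n) = (\<Sum>i\<le>m+n. coeff f i * coeff g (m + n - i))" by (rule coeff_mult)
  also have "\<dots> = coeff f m * coeff g (m + n - m) + (\<Sum>i\<in>{..m+n}-{m}. coeff f i * coeff g (m + n - i))"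
    by (subst sum.remove[of _ m]) auto
  also have "(\<Sum>i\<in>{..m+n}-{m}. coeff f i * coeff g (m + n - i)) = 0"
  proof (rule sum.neutral, intro ballI)
    fix i assume "i \<in> {..m+n}-{m}"
    then have "i < m \<or> i > m" by auto
    then show "coeff f i * coeff g (m + n - i) = 0"
      using assms by (auto simp: coeff_eq_0)
  qed
  finally show ?thesis by simp
qed

lemma coeff_shiftp_top:
  fixes w :: "'a::field_char_0 poly"
  assumes "degree w \<le> t"
  shows "coeff (shiftp w c) t = coeff w t"
proof -
  have "coeff (shiftp w c) t = (\<Sum>i<t. coeff w i * (if t \<le> i then of_nat (i choose t) * c ^ (i - t) else 0)) + coeff w t"
    by (simp add: coeff_shiftp[OF assms] lessThan_Suc_atMost[symmetric])
  also have "(\<Sum>i<t. coeff w i * (if t \<le> i then of_nat (i choose t) * c ^ (i - t) else 0)) = 0"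
    by (rule sum.neutral) auto
  finally show ?thesis by simp
qed

lemma falling_of_nat_le:
  assumes "k \<le> s"
  shows "falling (of_nat s :: 'a::comm_ring_1) k = (\<Prod>i<k. of_nat (s - i))"
  unfolding falling_def using assms by (intro prod.cong) (auto simp: of_nat_diff)

lemma falling_of_nat_gt:
  assumes "k > s"
  shows "falling (of_nat s :: 'a::{comm_ring_1,semiring_no_zero_divisors}) k = 0"
  unfolding falling_def using assms by (intro prod_zero) (auto intro!: bexI[of _ s])

lemma poly_bcoef: "poly (bcoef J a k) x = (\<Sum>j=k..J. of_nat (j choose k) * poly (a (J - j)) (x + of_int (int j - int J)))"
  by (simp add: bcoef_def poly_sum poly_pcompose add.commute)

lemma expansion:
  fixes Z :: "'a::field_char_0 poly"
  shows "(\<Sum>l\<le>J. shiftp (a l * Z) (- of_nat l)) = (\<Sum>k\<le>J. bcoef J a k * shiftp ((dlt ^^ k) Z) (- of_nat J))"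
proof (rule poly_ext_eq)
  fix x :: 'a
  define y where "y = x - of_nat J"
  have "poly (\<Sum>l\<le>J. shiftp (a l * Z) (- of_nat l)) x = (\<Sum>l=0..J. poly (a l) (x - of_nat l) * poly Z (x - of_nat l))"
    by (simp add: poly_sum atLeast0AtMost)
  also have "\<dots> = (\<Sum>j=0..J. poly (a (J - j)) (x - of_nat (J - j)) * poly Z (x - of_nat (J - j)))"
    by (subst sum.atLeastAtMost_rev) simp
  also have "\<dots> = (\<Sum>j=0..J. (\<Sum>k\<le>j. poly (a (J - j)) (x - of_nat (J - j)) * (of_nat (j choose k) * poly ((dlt ^^ k) Z) y)))"
  proof (rule sum.cong)
    fix j assume "j \<in> {0..J}"
    then have "x - of_nat (J - j) = y + of_nat j" by (simp add: y_def of_nat_diff)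
    then show "poly (a (J - j)) (x - of_nat (J - j)) * poly Z (x - of_nat (J - j)) =
       (\<Sum>k\<le>j. poly (a (J - j)) (x - of_nat (J - j)) * (of_nat (j choose k) * poly ((dlt ^^ k) Z) y))"
      by (simp add: newton sum_distrib_left)
  qed simp
  also have "\<dots> = (\<Sum>j\<le>J. (\<Sum>k\<in>{k. k \<le> J \<and> k \<le> j}. poly (a (J - j)) (x - of_nat (J - j)) * (of_nat (j choose k) * poly ((dlt ^^ k) Z) y)))"
    unfolding atLeast0AtMost by (intro sum.cong refl) auto
  also have "\<dots> = (\<Sum>k\<le>J. (\<Sum>j\<in>{j. j \<le> J \<and> k \<le> j}. poly (a (J - j)) (x - of_nat (J - j)) * (of_nat (j choose k) * poly ((dlt ^^ k) Z) y)))"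
    using sum.swap_restrict[of "{..J}" "{..J}" "\<lambda>j k. poly (a (J - j)) (x - of_nat (J - j)) * (of_nat (j choose k) * poly ((dlt ^^ k) Z) y)" "\<lambda>j k. k \<le> j"]
    by simp
  also have "\<dots> = (\<Sum>k\<le>J. poly (bcoef J a k) x * poly ((dlt ^^ k) Z) y)"
  proof (rule sum.cong[OF refl])
    fix k assume "k \<in> {..J}"
    have "{j. j \<le> J \<and> k \<le> j} = {k..J}" by auto
    moreover have "poly (a (J - j)) (x - of_nat (J - j)) = poly (a (J - j)) (x + of_int (int j - int J))" if "j \<le> J" for j
      using that by (simp add: of_nat_diff algebra_simps)
    ultimately show "(\<Sum>j\<in>{j. j \<le> J \<and> k \<le> j}. poly (a (J - j)) (x - of_nat (J - j)) * (of_nat (j choose k) * poly ((dlt ^^ k) Z) y)) =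
          poly (bcoef J a k) x * poly ((dlt ^^ k) Z) y"
      by (simp add: poly_bcoef sum_distrib_left mult_ac)
  qed
  also have "\<dots> = poly (\<Sum>k\<le>J. bcoef J a k * shiftp ((dlt ^^ k) Z) (- of_nat J)) x"
    by (simp add: poly_sum y_def)
  finally show "poly (\<Sum>l\<le>J. shiftp (a l * Z) (- of_nat l)) x = poly (\<Sum>k\<le>J. bcoef J a k * shiftp ((dlt ^^ k) Z) (- of_nat J)) x" .
qed

lemma deg_op_ge:
  assumes "k \<le> J" "bcoef J a k \<noteq> 0"
  shows "int (degree (bcoef J a k)) - int k \<le> deg_op J a"
proof -
  have fin: "finite {int (degree (bcoef J a k)) - int k | k. k \<le> J \<and> bcoef J a k \<noteq> 0}"
    by (rule finite_subset[of _ "(\<lambda>k. int (degree (bcoef J a k)) - int k) ` {..J}"]) auto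
  show ?thesis unfolding deg_op_def by (rule Max_ge[OF fin]) (use assms in auto)
qed

lemma L_deg:
  fixes p :: "'a::field_char_0 poly"
  assumes "nondegenerated J a" "p \<noteq> 0" "p = (\<Sum>l\<le>J. shiftp (a l * Z) (- of_nat l))"
  shows "deg_op J a \<le> int (degree p)"
proof -
  define d where "d = deg_op J a"
  define s where "s = degree Z"
  define B where "B = bcoef J a"
  define ck where "ck k = (if d + int k \<ge> 0 then coeff (B k) (nat (d + int k)) else 0)" for k
  have Z0: "Z \<noteq> 0" using assms(2,3) by auto
  have pexp: "p = (\<Sum>k\<le>J. B k * shiftp ((dlt ^^ k) Z) (- of_nat J))"
    using assms(3) expansion[of a Z J] by (simp add: B_def)
  have ind: "indicial J a (of_nat s) = (\<Sum>k\<le>J. ck k * falling (of_nat s) k)"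
    unfolding indicial_def ck_def d_def B_def by simp
  have ind0: "indicial J a (of_nat s) \<noteq> 0" using assms(1) unfolding nondegenerated_def by blast
  then obtain k0 where k0: "k0 \<le> J" "ck k0 * falling (of_nat s :: 'a) k0 \<noteq> 0"
    unfolding ind by (meson sum.neutral atMost_iff)
  then have "k0 \<le> s" using falling_of_nat_gt[of s k0] by (metis linorder_not_le mult_zero_right)
  moreover have "d + int k0 \<ge> 0" using k0 by (auto simp: ck_def split: if_splits)
  ultimately have ds: "d + int s \<ge> 0" by linarith
  define t where "t = nat (d + int s)"
  have trm: "coeff (B k * shiftp ((dlt ^^ k) Z) (- of_nat J)) t = ck k * falling (of_nat s) k * lead_coeff Z"
    if "k \<le> J" for k
  proof (cases "k \<le> s")
    case False
    then show ?thesis using falling_of_nat_gt[of s k] dlt_pow_zero[of Z k] by (auto simp: s_def)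
  next
    case True
    show ?thesis
    proof (cases "B k = 0")
      case True then show ?thesis by (simp add: ck_def)
    next
      case False
      have dk: "int (degree (B k)) - int k \<le> d" using deg_op_ge[OF that] False by (simp add: B_def d_def)
      then have dk0: "d + int k \<ge> 0" by linarith
      have t_eq: "t = nat (d + int k) + (s - k)" using True dk0 by (simp add: t_def)
      have "degree (B k) \<le> nat (d + int k)" using dk by linarith
      moreover have dw: "degree ((dlt ^^ k) Z) \<le> s - k" 
        "coeff ((dlt ^^ k) Z) (s - k) = (\<Prod>i<k. of_nat (s - i)) * lead_coeff Z"
        using dlt_pow[of k Z] True by (auto simp: s_def)
      ultimately have "coeff (B k * shiftp ((dlt ^^ k) Z) (- of_nat J)) t =
          coeff (B k) (nat (d + int k)) * coeff (shiftp ((dlt ^^ k) Z) (- of_nat J)) (s - k)"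
        unfolding t_eq by (intro coeff_mult_bound) auto
      also have "coeff (shiftp ((dlt ^^ k) Z) (- of_nat J)) (s - k) = (\<Prod>i<k. of_nat (s - i)) * lead_coeff Z"
        using coeff_shiftp_top[OF dw(1)] dw(2) by simp
      finally show ?thesis using dk0 True by (simp add: ck_def falling_of_nat_le mult_ac)
    qed
  qed
  have "coeff p t = (\<Sum>k\<le>J. ck k * falling (of_nat s) k * lead_coeff Z)"
    unfolding pexp coeff_sum using trm by simp
  also have "\<dots> = indicial J a (of_nat s) * lead_coeff Z"
    by (simp add: ind sum_distrib_right)
  finally have "coeff p t \<noteq> 0" using ind0 Z0 by simp
  then have "t \<le> degree p" by (rule le_degree)
  then show ?thesis using ds by (simp add: t_def d_def)
qed


lemma min_deg_prime:
  fixes q :: "'a::field poly"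
  assumes dq: "degree q > 0" and md: "\<And>d. d dvd q \<Longrightarrow> degree d = 0 \<or> degree d = degree q"
  shows "prime_elem q"
proof -
  have q0: "q \<noteq> 0" using dq by auto
  have nu: "\<not> is_unit q" using dq q0 by (simp add: is_unit_iff_degree)
  have "q dvd y" if xy: "q dvd x * y" and nx: "\<not> q dvd x" for x y
  proof -
    have x0: "x \<noteq> 0" using nx by auto
    define I where "I = {g. \<exists>u v. g = u * q + v * x}"
    have xI: "x \<in> I" unfolding I_def by (rule CollectI, rule exI[of _ 0], rule exI[of _ 1]) simp
    define m where "m = (LEAST m. \<exists>g\<in>I. g \<noteq> 0 \<and> degree g = m)"
    obtain g where g: "g \<in> I" "g \<noteq> 0" "degree g = m"
      using LeastI_ex[of "\<lambda>m. \<exists>g\<in>I. g \<noteq> 0 \<and> degree g = m"] xI x0 unfolding m_def by blast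
    have minI: "degree g \<le> degree f" if "f \<in> I" "f \<noteq> 0" for f
      unfolding g(3) m_def by (rule Least_le) (use that in blast)
    obtain u v where uv: "g = u * q + v * x" using g(1) unfolding I_def by blast
    have gdvd: "g dvd f" if fI: "f \<in> I" for f
    proof -
      obtain u' v' where f: "f = u' * q + v' * x" using fI unfolding I_def by blast
      have "f mod g = f - f div g * g" by (simp add: minus_div_mult_eq_mod)
      also have "\<dots> = (u' - f div g * u) * q + (v' - f div g * v) * x"
        by (simp add: f uv algebra_simps)
      finally have "f mod g \<in> I" unfolding I_def by blast
      moreover have "f mod g = 0 \<or> degree (f mod g) < degree g" using degree_mod_less[OF g(2)] by blast
      ultimately have "f mod g = 0" using minI by fastforce
      then show ?thesis by (simp add: mod_eq_0_iff_dvd)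
    qed
    have "q \<in> I" unfolding I_def by (rule CollectI, rule exI[of _ 1], rule exI[of _ 0]) simp
    then have gq: "g dvd q" by (rule gdvd)
    have gx: "g dvd x" using xI by (rule gdvd)
    have "degree g = 0"
    proof (rule ccontr)
      assume "degree g \<noteq> 0"
      then have "degree g = degree q" using md[OF gq] by simp
      from gq obtain k where k: "q = g * k" by (auto simp: dvd_def)
      then have "k \<noteq> 0" using q0 by auto
      then have "degree k = 0" using k g(2) \<open>degree g = degree q\<close> by (simp add: degree_mult_eq)
      then obtain c where c: "k = [:c:]" by (metis degree_eq_zeroE)
      with \<open>k \<noteq> 0\<close> have "c \<noteq> 0" by simp
      have "g = smult (inverse c) q" using k c \<open>c \<noteq> 0\<close> by simp
      then have "q dvd g" by (simp add: dvd_smult)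
      then have "q dvd x" using gx by (rule dvd_trans)
      with nx show False by simp
    qed
    then obtain c where c: "g = [:c:]" by (metis degree_eq_zeroE)
    with g(2) have c0: "c \<noteq> 0" by simp
    have "smult c y = g * y" using c by simp
    also have "\<dots> = u * y * q + v * (x * y)" using uv by (simp add: algebra_simps)
    finally have "smult c y = u * y * q + v * (x * y)" .
    moreover have "q dvd u * y * q + v * (x * y)" using xy by simp
    ultimately have "q dvd smult c y" by simp
    then show ?thesis using c0 by (rule dvd_smult_cancel)
  qed
  then show ?thesis using q0 nu unfolding prime_elem_def by blast
qed

lemma prime_not_dvd_prod:
  fixes Q :: "'a::idom"
  assumes "prime_elem Q" "finite A" "\<forall>x\<in>A. \<not> Q dvd f x"
  shows "\<not> Q dvd prod f A"
  using assms(2,3)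
proof (induction A rule: finite_induct)
  case empty then show ?case using assms(1) by (simp add: prime_elem_not_unit)
next
  case (insert x A)
  then show ?case using assms(1) by (simp add: prime_elem_dvd_mult_iff)
qed

lemma prime_isolate:
  fixes Q :: "'a::idom"
  assumes "prime_elem Q" "finite A" "k \<in> A"
    "P0 * (\<Prod>j\<in>A. Ej j) = (\<Sum>l\<in>A. Pl l * (\<Prod>j\<in>A-{l}. Ej j))"
    "Q dvd Ej k" "\<forall>j\<in>A-{k}. \<not> Q dvd Ej j"
  shows "Q dvd Pl k"
proof -
  have "Q dvd (\<Prod>j\<in>A. Ej j)" using assms(2,3,5) by (meson dvd_prodI dvd_trans)
  then have "Q dvd (\<Sum>l\<in>A. Pl l * (\<Prod>j\<in>A-{l}. Ej j))" unfolding assms(4)[symmetric] by simp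
  moreover have "(\<Sum>l\<in>A. Pl l * (\<Prod>j\<in>A-{l}. Ej j)) =
      Pl k * (\<Prod>j\<in>A-{k}. Ej j) + (\<Sum>l\<in>A-{k}. Pl l * (\<Prod>j\<in>A-{l}. Ej j))"
    using assms(2,3) by (rule sum.remove)
  moreover have "Q dvd (\<Sum>l\<in>A-{k}. Pl l * (\<Prod>j\<in>A-{l}. Ej j))"
  proof (rule dvd_sum)
    fix l assume "l \<in> A - {k}"
    then have "Ej k dvd (\<Prod>j\<in>A-{l}. Ej j)" using assms(2,3) by (intro dvd_prodI) auto
    then have "Q dvd (\<Prod>j\<in>A-{l}. Ej j)" using assms(5) by (rule dvd_trans[rotated])
    then show "Q dvd Pl l * (\<Prod>j\<in>A-{l}. Ej j)" by simp
  qed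
  ultimately have "Q dvd Pl k * (\<Prod>j\<in>A-{k}. Ej j)" by (simp add: dvd_add_left_iff)
  moreover have "\<not> Q dvd (\<Prod>j\<in>A-{k}. Ej j)" using assms(1,2,6) by (intro prime_not_dvd_prod) auto
  ultimately show ?thesis using assms(1) by (simp add: prime_elem_dvd_mult_iff)
qed

lemma coeff_shiftp_sub:
  fixes q :: "'a::field_char_0 poly"
  assumes "degree q = Suc m"
  shows "coeff (shiftp q c) m = coeff q m + of_nat (Suc m) * c * lead_coeff q"
proof -
  have "coeff (shiftp q c) m = (\<Sum>i<m. coeff q i * (if m \<le> i then of_nat (i choose m) * c ^ (i - m) else 0))
      + coeff q m + coeff q (Suc m) * (of_nat (Suc m) * c)"
    using coeff_shiftp[of q "Suc m" c m] assms by (simp add: lessThan_Suc_atMost[symmetric])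
  also have "(\<Sum>i<m. coeff q i * (if m \<le> i then of_nat (i choose m) * c ^ (i - m) else 0)) = 0"
    by (rule sum.neutral) auto
  finally show ?thesis using assms by (simp add: mult_ac)
qed

lemma shift_inj:
  fixes q :: "'a::field_char_0 poly"
  assumes "degree q > 0" "shiftp q c1 dvd shiftp q c2"
  shows "c1 = c2"
proof -
  have q0: "q \<noteq> 0" using assms by auto
  from assms(2) obtain k where k: "shiftp q c2 = shiftp q c1 * k" by (auto simp: dvd_def)
  then have "k \<noteq> 0" using q0 by auto
  moreover have "degree (shiftp q c2) = degree (shiftp q c1 * k)" using k by simp
  ultimately have "degree k = 0" using q0 by (simp add: degree_mult_eq)
  then obtain c where c: "k = [:c:]" by (metis degree_eq_zeroE)
  have "lead_coeff q = lead_coeff (shiftp q c2)" by (rule lead_coeff_shiftp[symmetric])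
  also have "\<dots> = lead_coeff (shiftp q c1) * lead_coeff k" unfolding k by (rule lead_coeff_mult)
  also have "\<dots> = lead_coeff q * c" unfolding c lead_coeff_shiftp by simp
  finally have "lead_coeff q = lead_coeff q * c" .
  then have "c = 1" using q0 by simp
  with k c have eq: "shiftp q c2 = shiftp q c1" by simp
  obtain m where m: "degree q = Suc m" using assms(1) gr0_implies_Suc by blast
  have "coeff (shiftp q c2) m = coeff (shiftp q c1) m" using eq by simp
  then have "of_nat (Suc m) * c2 * lead_coeff q = of_nat (Suc m) * c1 * lead_coeff q"
    unfolding coeff_shiftp_sub[OF m] by simp
  then show ?thesis using q0 by (simp del: of_nat_Suc)
qed

lemma L_den:
  fixes p :: "'a::field_char_0 poly"
  assumes J0: "J > 0" and E0: "E \<noteq> 0" and cop: "coprime N E"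
    and hc: "\<forall>h::nat. coprime (a 0) (pcompose (a J) [:of_nat h, 1:])"
    and id: "p * (\<Prod>l\<le>J. shiftp E (- of_nat l)) =
     (\<Sum>l\<le>J. shiftp (a l * N) (- of_nat l) * (\<Prod>j\<in>{..J}-{l}. shiftp E (- of_nat j)))"
  shows "degree E = 0"
proof (rule ccontr)
  assume dE: "degree E \<noteq> 0"
  define m where "m = (LEAST m. \<exists>d. d dvd E \<and> degree d > 0 \<and> degree d = m)"
  obtain q where q: "q dvd E" "degree q > 0" "degree q = m"
  proof -
    have "\<exists>m d. d dvd E \<and> degree d > 0 \<and> degree d = m" using dE by (intro exI[of _ "degree E"] exI[of _ E]) auto
    from LeastI_ex[OF this] show ?thesis using that unfolding m_def by blast
  qed
  have q0: "q \<noteq> 0" using q by auto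
  have md: "degree d = 0 \<or> degree d = degree q" if "d dvd q" for d
  proof (cases "degree d = 0")
    case False
    have "d dvd E" using that q(1) by (rule dvd_trans)
    then have "m \<le> degree d" unfolding m_def using False by (intro Least_le) blast
    moreover have "degree d \<le> degree q" using that q0 by (rule dvd_imp_degree_le)
    ultimately show ?thesis using q(3) by simp
  qed simp
  have pq: "prime_elem q" using q(2) md by (rule min_deg_prime)
  define Qs where "Qs h = shiftp q (of_int h)" for h :: int
  have pQ: "prime_elem (Qs h)" for h unfolding Qs_def using pq by (rule prime_elem_shiftp)
  have Qinj: "h1 = h2" if "Qs h1 dvd Qs h2" for h1 h2
    using shift_inj[OF q(2) that[unfolded Qs_def]] by simp
  have Qshift: "shiftp (Qs h) (of_nat j) = Qs (h + int j)" for h j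
    by (simp add: Qs_def shiftp_shiftp)
  define H where "H = {h. Qs h dvd E}"
  have "0 \<in> H" using q(1) by (simp add: H_def Qs_def)
  have prodH: "(\<Prod>h\<in>S. Qs h) dvd E" if "finite S" "S \<subseteq> H" for S
    using that
  proof (induction S rule: finite_induct)
    case empty then show ?case by simp
  next
    case (insert h0 S)
    then obtain R where R: "E = (\<Prod>h\<in>S. Qs h) * R" by (auto simp: dvd_def)
    have "Qs h0 dvd E" using insert by (simp add: H_def)
    moreover have "\<not> Qs h0 dvd (\<Prod>h\<in>S. Qs h)"
      using insert(1,2) Qinj by (intro prime_not_dvd_prod[OF pQ]) auto
    ultimately have "Qs h0 dvd R" unfolding R using pQ by (simp add: prime_elem_dvd_mult_iff)
    then have "Qs h0 * (\<Prod>h\<in>S. Qs h) dvd R * (\<Prod>h\<in>S. Qs h)" by (rule mult_dvd_mono) simp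
    then show ?case using insert(1,2) R by (simp add: mult.commute)
  qed
  have cardH: "card S \<le> degree E" if "finite S" "S \<subseteq> H" for S
  proof -
    have "degree (\<Prod>h\<in>S. Qs h) = (\<Sum>h\<in>S. degree (Qs h))"
      by (rule degree_prod_sum_eq) (simp add: Qs_def q0)
    also have "\<dots> = card S * degree q" by (simp add: Qs_def)
    finally have "card S * degree q \<le> degree E" using dvd_imp_degree_le[OF prodH[OF that] E0] by simp
    moreover have "card S \<le> card S * degree q" using q(2) by simp
    ultimately show ?thesis by linarith
  qed
  have finH: "finite H"
  proof (rule ccontr)
    assume "infinite H"
    then obtain S where "finite S" "card S = Suc (degree E)" "S \<subseteq> H"
      using infinite_arbitrarily_large by blast
    with cardH show False by fastforce
  qed
  define hM where "hM = Max H"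
  define hm where "hm = Min H"
  have hM: "hM \<in> H" "\<And>h. h \<in> H \<Longrightarrow> h \<le> hM"
    using finH \<open>0 \<in> H\<close> by (auto simp: hM_def intro: Max_in)
  have hm: "hm \<in> H" "\<And>h. h \<in> H \<Longrightarrow> hm \<le> h"
    using finH \<open>0 \<in> H\<close> by (auto simp: hm_def intro: Min_in)
  have shdvd: "Qs h dvd shiftp E (- of_nat j) \<longleftrightarrow> h + int j \<in> H" for h j
  proof -
    have "Qs h dvd shiftp E (- of_nat j) \<longleftrightarrow> shiftp (Qs h) (of_nat j) dvd shiftp (shiftp E (- of_nat j)) (of_nat j)"
      by (rule shiftp_dvd_iff[symmetric])
    also have "\<dots> \<longleftrightarrow> Qs (h + int j) dvd E" by (simp add: Qshift shiftp_shiftp)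
    finally show ?thesis by (simp add: H_def)
  qed
  have notN: "\<not> Qs h dvd N" if "h \<in> H" for h
  proof
    assume "Qs h dvd N"
    moreover have "Qs h dvd E" using that by (simp add: H_def)
    ultimately have "is_unit (Qs h)" using cop coprime_common_divisor by blast
    with pQ show False by (simp add: prime_elem_def)
  qed
  have "Qs hM dvd shiftp (a 0 * N) (- of_nat 0)"
  proof (rule prime_isolate[OF pQ finite_atMost _ id])
    show "0 \<in> {..J}" by simp
    show "Qs hM dvd shiftp E (- of_nat 0)" using hM(1) by (simp add: H_def)
    show "\<forall>j\<in>{..J}-{0}. \<not> Qs hM dvd shiftp E (- of_nat j)"
    proof
      fix j assume "j \<in> {..J}-{0}"
      then have "hM + int j \<notin> H" using hM(2)[of "hM + int j"] by auto
      then show "\<not> Qs hM dvd shiftp E (- of_nat j)" by (simp add: shdvd)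
    qed
  qed
  then have "Qs hM dvd a 0 * N" by simp
  then have A0: "Qs hM dvd a 0" using notN[OF hM(1)] pQ by (simp add: prime_elem_dvd_mult_iff)
  have "Qs (hm - int J) dvd shiftp (a J * N) (- of_nat J)"
  proof (rule prime_isolate[OF pQ finite_atMost _ id])
    show "J \<in> {..J}" by simp
    show "Qs (hm - int J) dvd shiftp E (- of_nat J)" using hm(1) by (simp add: shdvd)
    show "\<forall>j\<in>{..J}-{J}. \<not> Qs (hm - int J) dvd shiftp E (- of_nat j)"
    proof
      fix j assume "j \<in> {..J}-{J}"
      then have "hm - int J + int j \<notin> H" using hm(2)[of "hm - int J + int j"] by auto
      then show "\<not> Qs (hm - int J) dvd shiftp E (- of_nat j)" by (simp add: shdvd)
    qed
  qed
  then have "Qs (hm - int J) dvd shiftp (a J) (- of_nat J) * shiftp N (- of_nat J)"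
    by (simp add: shiftp_mult)
  moreover have "\<not> Qs (hm - int J) dvd shiftp N (- of_nat J)"
  proof
    assume "Qs (hm - int J) dvd shiftp N (- of_nat J)"
    then have "shiftp (Qs (hm - int J)) (of_nat J) dvd shiftp (shiftp N (- of_nat J)) (of_nat J)"
      by (rule shiftp_dvd)
    then have "Qs hm dvd N" by (simp add: Qshift shiftp_shiftp)
    with notN[OF hm(1)] show False by simp
  qed
  ultimately have "Qs (hm - int J) dvd shiftp (a J) (- of_nat J)" using pQ by (simp add: prime_elem_dvd_mult_iff)
  then have "shiftp (Qs (hm - int J)) (of_nat J) dvd shiftp (shiftp (a J) (- of_nat J)) (of_nat J)"
    by (rule shiftp_dvd)
  then have "Qs hm dvd a J" by (simp add: Qshift shiftp_shiftp)
  then have "shiftp (Qs hm) (of_nat (nat (hM - hm))) dvd shiftp (a J) (of_nat (nat (hM - hm)))"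
    by (rule shiftp_dvd)
  moreover have "hM - hm \<ge> 0" using hm(2)[OF hM(1)] by simp
  then have "shiftp (Qs hm) (of_nat (nat (hM - hm))) = Qs hM"
    unfolding Qshift by simp
  ultimately have AJ: "Qs hM dvd pcompose (a J) [:of_nat (nat (hM - hm)), 1:]"
    unfolding shiftp_def[symmetric] by simp
  have "is_unit (Qs hM)" using hc A0 AJ coprime_common_divisor by blast
  with pQ show False by (simp add: prime_elem_def)
qed


lemma finite_roots_nat:
  fixes P :: "'a::field_char_0 poly"
  assumes "P \<noteq> 0"
  shows "finite {m::nat. poly P (of_nat m) = 0}"
proof -
  have "finite ((of_nat :: nat \<Rightarrow> 'a) -` {x. poly P x = 0})"
    by (rule finite_vimageI[OF poly_roots_finite[OF assms]]) (simp add: inj_on_def)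
  then show ?thesis by (simp add: vimage_def)
qed

lemma eventually_poly_nonzero:
  fixes P :: "'a::field_char_0 poly"
  assumes "P \<noteq> 0"
  shows "\<forall>\<^sub>F m in sequentially. poly P (of_nat m) \<noteq> 0"
  unfolding cofinite_eq_sequentially[symmetric] eventually_cofinite
  using finite_roots_nat[OF assms] by simp

lemma poly_zero_eventually:
  fixes P :: "'a::field_char_0 poly"
  assumes "\<forall>\<^sub>F m in sequentially. poly P (of_nat m) = 0"
  shows "P = 0"
proof (rule ccontr)
  assume "P \<noteq> 0"
  from eventually_conj[OF assms eventually_poly_nonzero[OF this]]
  have "\<forall>\<^sub>F m in sequentially. False" by simp
  then show False by simp
qed

lemma eventually_poly_nonzero_shifts:
  fixes P :: "'a::field_char_0 poly"
  assumes "P \<noteq> 0"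
  shows "\<forall>\<^sub>F m in sequentially. \<forall>l\<le>J. poly P (of_nat m - of_nat l) \<noteq> 0"
proof -
  have "\<forall>l\<in>{..J}. \<forall>\<^sub>F m in sequentially. poly P (of_nat m - of_nat l) \<noteq> 0"
  proof
    fix l assume "l \<in> {..J}"
    have "\<forall>\<^sub>F m in sequentially. poly (shiftp P (- of_nat l)) (of_nat m) \<noteq> 0"
      by (rule eventually_poly_nonzero) (use assms in simp)
    then show "\<forall>\<^sub>F m in sequentially. poly P (of_nat m - of_nat l) \<noteq> 0" by simp
  qed
  from eventually_ball_finite[OF _ this] have "\<forall>\<^sub>F m in sequentially. \<forall>l\<in>{..J}. poly P (of_nat m - of_nat l) \<noteq> 0"
    by simp
  then show ?thesis by (rule eventually_mono) auto
qed

lemma reduce_fraction: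
  fixes N E :: "'a::field_char_0 poly"
  assumes "E \<noteq> 0"
  shows "\<exists>N' E'. E' \<noteq> 0 \<and> coprime N' E' \<and> N' * E = N * E'"
proof -
  define m where "m = (LEAST m. \<exists>N' E'. E' \<noteq> 0 \<and> N' * E = N * E' \<and> degree E' = m)"
  have ex: "\<exists>N' E'. E' \<noteq> 0 \<and> N' * E = N * E' \<and> degree E' = degree E" using assms by auto
  obtain N' E' where NE: "E' \<noteq> 0" "N' * E = N * E'" "degree E' = m"
    using LeastI_ex[of "\<lambda>m. \<exists>N' E'. E' \<noteq> 0 \<and> N' * E = N * E' \<and> degree E' = m"] ex
    unfolding m_def by blast
  have "coprime N' E'"
  proof (rule coprimeI)
    fix c assume c: "c dvd N'" "c dvd E'"
    show "is_unit c"
    proof (rule ccontr)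
      assume nu: "\<not> is_unit c"
      obtain N2 where N2: "N' = c * N2" using c(1) by (auto simp: dvd_def)
      obtain E2 where E2: "E' = c * E2" using c(2) by (auto simp: dvd_def)
      have c0: "c \<noteq> 0" "E2 \<noteq> 0" using NE(1) E2 by auto
      then have "degree c > 0" using nu is_unit_iff_degree by blast
      then have lt: "degree E2 < m" using NE(3) E2 c0 by (simp add: degree_mult_eq)
      have "c * (N2 * E) = c * (N * E2)" using NE(2) N2 E2 by (simp add: mult_ac)
      then have "N2 * E = N * E2" using c0 by simp
      then have "m \<le> degree E2" unfolding m_def using c0 by (intro Least_le) blast
      with lt show False by simp
    qed
  qed
  with NE show ?thesis by blast
qed

lemma L_reduce:
  fixes p :: "'a::field_char_0 poly"
  assumes "E \<noteq> 0" "\<forall>\<^sub>F m in sequentially. (\<forall>l\<le>J. poly E (of_nat m - of_nat l) \<noteq> 0) \<and>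
     poly p (of_nat m) = (\<Sum>l\<le>J. poly (a l) (of_nat m - of_nat l) *
        (poly N (of_nat m - of_nat l) / poly E (of_nat m - of_nat l)))"
  shows "\<exists>N' E'. E' \<noteq> 0 \<and> coprime N' E' \<and> p * (\<Prod>l\<le>J. shiftp E' (- of_nat l)) =
     (\<Sum>l\<le>J. shiftp (a l * N') (- of_nat l) * (\<Prod>j\<in>{..J}-{l}. shiftp E' (- of_nat j)))"
proof -
  obtain N' E' where NE: "E' \<noteq> 0" "coprime N' E'" "N' * E = N * E'"
    using reduce_fraction[OF assms(1)] by blast
  define P where "P = p * (\<Prod>l\<le>J. shiftp E' (- of_nat l)) -
     (\<Sum>l\<le>J. shiftp (a l * N') (- of_nat l) * (\<Prod>j\<in>{..J}-{l}. shiftp E' (- of_nat j)))"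
  have "\<forall>\<^sub>F m in sequentially. poly P (of_nat m) = 0"
    using eventually_conj[OF assms(2) eventually_poly_nonzero_shifts[OF NE(1), of J]]
  proof eventually_elim
    case (elim m)
    define x :: 'a where "x = of_nat m"
    have nz: "poly E (x - of_nat l) \<noteq> 0" "poly E' (x - of_nat l) \<noteq> 0" if "l \<le> J" for l
      using elim that by (auto simp: x_def)
    have fr: "poly N (x - of_nat l) / poly E (x - of_nat l) = poly N' (x - of_nat l) / poly E' (x - of_nat l)"
      if "l \<le> J" for l
    proof -
      have "poly N' (x - of_nat l) * poly E (x - of_nat l) = poly N (x - of_nat l) * poly E' (x - of_nat l)"
        using arg_cong[OF NE(3), of "\<lambda>q. poly q (x - of_nat l)"] by simp
      then show ?thesis using nz[OF that] by (simp add: field_simps)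
    qed
    have "poly p x = (\<Sum>l\<le>J. poly (a l) (x - of_nat l) * (poly N (x - of_nat l) / poly E (x - of_nat l)))"
      using elim unfolding x_def by blast
    also have "\<dots> = (\<Sum>l\<le>J. poly (a l) (x - of_nat l) * (poly N' (x - of_nat l) / poly E' (x - of_nat l)))"
      by (rule sum.cong[OF refl], subst fr) auto
    finally have "poly p x * (\<Prod>l\<le>J. poly E' (x - of_nat l)) =
        (\<Sum>l\<le>J. poly (a l) (x - of_nat l) * (poly N' (x - of_nat l) / poly E' (x - of_nat l)) * (\<Prod>j\<le>J. poly E' (x - of_nat j)))"
      by (simp add: sum_distrib_right)
    also have "\<dots> = (\<Sum>l\<le>J. poly (a l) (x - of_nat l) * poly N' (x - of_nat l) * (\<Prod>j\<in>{..J}-{l}. poly E' (x - of_nat j)))"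
    proof (rule sum.cong[OF refl])
      fix l assume l: "l \<in> {..J}"
      have "(\<Prod>j\<le>J. poly E' (x - of_nat j)) = poly E' (x - of_nat l) * (\<Prod>j\<in>{..J}-{l}. poly E' (x - of_nat j))"
        using l by (subst prod.remove[of _ l]) auto
      then show "poly (a l) (x - of_nat l) * (poly N' (x - of_nat l) / poly E' (x - of_nat l)) * (\<Prod>j\<le>J. poly E' (x - of_nat j)) =
          poly (a l) (x - of_nat l) * poly N' (x - of_nat l) * (\<Prod>j\<in>{..J}-{l}. poly E' (x - of_nat j))"
        using nz l by simp
    qed
    finally show ?case by (simp add: P_def poly_sum poly_prod x_def)
  qed
  then have "P = 0" by (rule poly_zero_eventually)
  with NE show ?thesis unfolding P_def by auto
qed


lemma indep:
  fixes F :: "nat \<Rightarrow> 'a::field_char_0"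
  assumes "hol_order F = J"
    "\<forall>\<^sub>F n in sequentially. (\<Sum>i<J. poly (c i) (of_nat n) * F (n + i)) = 0"
  shows "\<forall>i<J. c i = 0"
proof (rule ccontr)
  assume "\<not> (\<forall>i<J. c i = 0)"
  then have ne: "{i. i < J \<and> c i \<noteq> 0} \<noteq> {}" by auto
  define m where "m = Max {i. i < J \<and> c i \<noteq> 0}"
  have fin: "finite {i. i < J \<and> c i \<noteq> 0}" by simp
  have m: "m < J" "c m \<noteq> 0" using Max_in[OF fin ne] by (auto simp: m_def)
  have above: "c i = 0" if "m < i" "i < J" for i
    using Max_ge[OF fin, of i] that unfolding m_def[symmetric] by (cases "c i = 0") auto
  have "annihilates m c F"
    unfolding annihilates_def using assms(2)
  proof (rule eventually_mono)
    fix n assume h: "(\<Sum>i<J. poly (c i) (of_nat n) * F (n + i)) = 0"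
    have "apply_op m c F n = (\<Sum>i<J. poly (c i) (of_nat n) * F (n + i))"
      unfolding apply_op_def
      by (rule sum.mono_neutral_left) (use m above in auto)
    with h show "apply_op m c F n = 0" by simp
  qed
  with m(2) have "has_ann_of_order F m" unfolding has_ann_of_order_def by blast
  then have "hol_order F \<le> m" unfolding hol_order_def by (rule Least_le)
  with assms(1) m(1) show False by simp
qed

lemma order_G:
  fixes F :: "nat \<Rightarrow> 'a::field_char_0"
  assumes "annihilates J a F" "a J \<noteq> 0" "p \<noteq> 0"
  shows "hol_order (\<lambda>n. poly p (of_nat n) * F n) \<le> J"
proof -
  define b where "b i = a i * (\<Prod>j\<in>{..J}-{i}. shiftp p (of_nat j))" for i
  have "b J \<noteq> 0" using assms(2,3) by (simp add: b_def)
  moreover have "annihilates J b (\<lambda>n. poly p (of_nat n) * F n)"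
    unfolding annihilates_def using assms(1)[unfolded annihilates_def]
  proof (rule eventually_mono)
    fix n assume h: "apply_op J a F n = 0"
    have "apply_op J b (\<lambda>n. poly p (of_nat n) * F n) n =
        (\<Sum>i\<le>J. (\<Prod>j\<le>J. poly p (of_nat n + of_nat j)) * (poly (a i) (of_nat n) * F (n + i)))"
      unfolding apply_op_def
    proof (rule sum.cong[OF refl])
      fix i assume i: "i \<in> {..J}"
      have "(\<Prod>j\<le>J. poly p (of_nat n + of_nat j)) = poly p (of_nat n + of_nat i) * (\<Prod>j\<in>{..J}-{i}. poly p (of_nat n + of_nat j))"
        using i by (subst prod.remove[of _ i]) auto
      then show "poly (b i) (of_nat n) * (poly p (of_nat (n + i)) * F (n + i)) =
          (\<Prod>j\<le>J. poly p (of_nat n + of_nat j)) * (poly (a i) (of_nat n) * F (n + i))"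
        by (simp add: b_def poly_prod mult_ac)
    qed
    also have "\<dots> = 0" using h by (simp add: apply_op_def sum_distrib_left[symmetric])
    finally show "apply_op J b (\<lambda>n. poly p (of_nat n) * F n) n = 0" .
  qed
  ultimately have "has_ann_of_order (\<lambda>n. poly p (of_nat n) * F n) J"
    unfolding has_ann_of_order_def by blast
  then show ?thesis unfolding hol_order_def by (rule Least_le)
qed

lemma key_alg:
  fixes f w w1 aa :: "nat \<Rightarrow> 'a::field"
  assumes d0: "d0 \<noteq> 0" and d1: "d1 \<noteq> 0"
    and T: "P * f 0 = (\<Sum>i<Suc J0. w1 i / d1 * f (Suc i)) - (\<Sum>i<Suc J0. w i / d0 * f i)"
    and L: "(\<Sum>i<Suc J0. aa i * f i) + \<alpha> * f (Suc J0) = 0"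
  shows "(\<Sum>i<Suc J0. ((if i = 0 then - (P * d0 * d1 * \<alpha>) else w1 (i - 1) * d0 * \<alpha>)
            - w i * d1 * \<alpha> - w1 J0 * d0 * aa i) * f i) = 0"
proof -
  define X where "X = (\<Sum>i<J0. w1 i * f (Suc i))"
  define Y where "Y = (\<Sum>i<Suc J0. w i * f i)"
  have s1: "(\<Sum>i<Suc J0. (if i = 0 then - (P * d0 * d1 * \<alpha>) else w1 (i - 1) * d0 * \<alpha>) * f i)
      = - (P * d0 * d1 * \<alpha>) * f 0 + d0 * \<alpha> * X"
    by (subst sum.lessThan_Suc_shift) (simp add: X_def sum_distrib_left mult_ac)
  have s2: "(\<Sum>i<Suc J0. aa i * f i) = - \<alpha> * f (Suc J0)" using L by (simp add: add_eq_0_iff)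
  have s3: "(\<Sum>i<Suc J0. w1 i / d1 * f (Suc i)) = (X + w1 J0 * f (Suc J0)) / d1"
    by (simp add: X_def sum_divide_distrib[symmetric] add_divide_distrib)
  have s4: "(\<Sum>i<Suc J0. w i / d0 * f i) = Y / d0"
    by (simp add: Y_def sum_divide_distrib[symmetric])
  have T': "P * f 0 * d0 * d1 = d0 * (X + w1 J0 * f (Suc J0)) - d1 * Y"
    using T d0 d1 unfolding s3 s4 by (simp add: field_simps)
  have "(\<Sum>i<Suc J0. ((if i = 0 then - (P * d0 * d1 * \<alpha>) else w1 (i - 1) * d0 * \<alpha>)
            - w i * d1 * \<alpha> - w1 J0 * d0 * aa i) * f i) =
      (\<Sum>i<Suc J0. (if i = 0 then - (P * d0 * d1 * \<alpha>) else w1 (i - 1) * d0 * \<alpha>) * f i)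
      - d1 * \<alpha> * Y - w1 J0 * d0 * (\<Sum>i<Suc J0. aa i * f i)"
    by (simp add: Y_def algebra_simps sum_subtractf sum_distrib_left sum.distrib)
  also have "\<dots> = - (P * f 0 * d0 * d1) * \<alpha> + d0 * \<alpha> * X - d1 * \<alpha> * Y + w1 J0 * d0 * \<alpha> * f (Suc J0)"
    unfolding s1 s2 by (simp add: algebra_simps)
  also have "\<dots> = 0" unfolding T' by (simp add: algebra_simps)
  finally show ?thesis .
qed

lemma L_derive:
  fixes F :: "nat \<Rightarrow> 'a::field_char_0"
  assumes hF: "hol_order F = J" and J0: "J > 0" and ann: "annihilates J a F" and aJ: "a J \<noteq> 0"
    and p0: "p \<noteq> 0" and sm: "summable_seq (\<lambda>n. poly p (of_nat n) * F n)"
  shows "\<exists>N E. E \<noteq> 0 \<and> (\<forall>\<^sub>F m in sequentially. (\<forall>l\<le>J. poly E (of_nat m - of_nat l) \<noteq> 0) \<and>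
     poly p (of_nat m) = (\<Sum>l\<le>J. poly (a l) (of_nat m - of_nat l) *
        (poly N (of_nat m - of_nat l) / poly E (of_nat m - of_nat l))))"
proof -
  define G where "G = (\<lambda>n. poly p (of_nat n) * F n)"
  define J' where "J' = hol_order G"
  have J'J: "J' \<le> J" using order_G[OF ann aJ p0] by (simp add: J'_def G_def)
  have "summable_seq G" using sm by (simp add: G_def)
  then obtain un ud where ud: "\<forall>i<J'. ud i \<noteq> 0" and
    Teq0: "\<forall>\<^sub>F n in sequentially. G n =
       (\<Sum>i<J'. poly (un i) (of_nat (Suc n)) / poly (ud i) (of_nat (Suc n)) * G (Suc n + i)) -
       (\<Sum>i<J'. poly (un i) (of_nat n) / poly (ud i) (of_nat n) * G (n + i))"
    unfolding summable_seq_def Let_def J'_def[symmetric] by blast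
  define T where "T n = (\<Sum>i<J'. poly (un i) (of_nat n) / poly (ud i) (of_nat n) * G (n + i))" for n
  have Teq: "\<forall>\<^sub>F n in sequentially. G n = T (Suc n) - T n" using Teq0 by (simp add: T_def)
  define D where "D = (\<Prod>i<J'. ud i)"
  have D0: "D \<noteq> 0" using ud by (simp add: D_def)
  define W where "W i = (if i < J' then un i * shiftp p (of_nat i) * (\<Prod>j\<in>{..<J'}-{i}. ud j) else 0)" for i
  have Tform: "T n = (\<Sum>i<J. poly (W i) (of_nat n) / poly D (of_nat n) * F (n + i))"
    if Dn: "poly D (of_nat n) \<noteq> 0" for n
  proof -
    have "T n = (\<Sum>i<J'. poly (W i) (of_nat n) / poly D (of_nat n) * F (n + i))"
      unfolding T_def
    proof (rule sum.cong[OF refl])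
      fix i assume i: "i \<in> {..<J'}"
      have Dsplit: "poly D (of_nat n) = poly (ud i) (of_nat n) * (\<Prod>j\<in>{..<J'}-{i}. poly (ud j) (of_nat n))"
        unfolding D_def poly_prod using i by (subst prod.remove[of _ i]) auto
      then have nz: "poly (ud i) (of_nat n) \<noteq> 0" "(\<Prod>j\<in>{..<J'}-{i}. poly (ud j) (of_nat n)) \<noteq> 0"
        using Dn by auto
      have "poly (W i) (of_nat n) = poly (un i) (of_nat n) * poly p (of_nat n + of_nat i) * (\<Prod>j\<in>{..<J'}-{i}. poly (ud j) (of_nat n))"
        using i by (simp add: W_def poly_prod)
      then show "poly (un i) (of_nat n) / poly (ud i) (of_nat n) * G (n + i) =
          poly (W i) (of_nat n) / poly D (of_nat n) * F (n + i)"
        unfolding Dsplit G_def using nz by (simp add: field_simps)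
    qed
    also have "\<dots> = (\<Sum>i<J. poly (W i) (of_nat n) / poly D (of_nat n) * F (n + i))"
      by (rule sum.mono_neutral_left) (use J'J in \<open>auto simp: W_def\<close>)
    finally show ?thesis .
  qed
  define A where "A = a J"
  obtain J0 where J0def: "J = Suc J0" using J0 gr0_implies_Suc by blast
  define C where "C i = (if i = 0 then - (p * D * shiftp D 1 * A) else shiftp (W (i - 1)) 1 * D * A)
      - W i * shiftp D 1 * A - shiftp (W J0) 1 * D * a i" for i
  have S1: "shiftp D 1 \<noteq> 0" using D0 by simp
  have evC: "\<forall>\<^sub>F n in sequentially. (\<Sum>i<J. poly (C i) (of_nat n) * F (n + i)) = 0"
    using eventually_conj[OF eventually_conj[OF Teq ann[unfolded annihilates_def]]
       eventually_conj[OF eventually_poly_nonzero[OF D0] eventually_poly_nonzero[OF S1]]]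
  proof eventually_elim
    case (elim n)
    define x :: 'a where "x = of_nat n"
    have d0: "poly D x \<noteq> 0" and d1: "poly D (x + 1) \<noteq> 0" using elim by (auto simp: x_def)
    have T: "poly p x * F (n + 0) = (\<Sum>i<Suc J0. poly (W i) (x + 1) / poly D (x + 1) * F (n + Suc i))
         - (\<Sum>i<Suc J0. poly (W i) x / poly D x * F (n + i))"
    proof -
      have "poly p x * F n = T (Suc n) - T n" using elim by (simp add: G_def x_def)
      also have "T (Suc n) = (\<Sum>i<J. poly (W i) (x + 1) / poly D (x + 1) * F (Suc n + i))"
        using Tform[of "Suc n"] d1 by (simp add: x_def ac_simps)
      also have "T n = (\<Sum>i<J. poly (W i) x / poly D x * F (n + i))"
        using Tform[of n] d0 by (simp add: x_def)
      finally show ?thesis by (simp add: J0def)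
    qed
    have L: "(\<Sum>i<Suc J0. poly (a i) x * F (n + i)) + poly A x * F (n + Suc J0) = 0"
      using elim unfolding apply_op_def by (simp add: x_def A_def J0def lessThan_Suc_atMost[symmetric])
    have "(\<Sum>i<Suc J0. ((if i = 0 then - (poly p x * poly D x * poly D (x + 1) * poly A x)
            else poly (W (i - 1)) (x + 1) * poly D x * poly A x)
            - poly (W i) x * poly D (x + 1) * poly A x - poly (W J0) (x + 1) * poly D x * poly (a i) x) * F (n + i)) = 0"
      by (rule key_alg[OF d0 d1 T L])
    moreover have "poly (C i) x = (if i = 0 then - (poly p x * poly D x * poly D (x + 1) * poly A x)
            else poly (W (i - 1)) (x + 1) * poly D x * poly A x)
            - poly (W i) x * poly D (x + 1) * poly A x - poly (W J0) (x + 1) * poly D x * poly (a i) x" for i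
      by (cases "i = 0") (simp_all add: C_def)
    ultimately show ?case by (simp add: x_def J0def)
  qed
  have C0: "\<forall>i<J. C i = 0" by (rule indep[OF hF evC])
  define N where "N = - shiftp (W J0) 1"
  define E where "E = shiftp D 1 * A"
  have E0: "E \<noteq> 0" using S1 aJ by (simp add: E_def A_def)
  define vv where "vv i n = poly (W i) (of_nat n) / poly D (of_nat n)" for i n
  define zz where "zz n = poly N (of_nat n) / poly E (of_nat n)" for n
  obtain N0 where N0: "\<And>n. n \<ge> N0 \<Longrightarrow> poly D (of_nat n) \<noteq> 0 \<and> poly A (of_nat n) \<noteq> 0"
    using eventually_conj[OF eventually_poly_nonzero[OF D0] eventually_poly_nonzero[of A]] aJ
    unfolding eventually_sequentially A_def by blast
  have Cn: "poly (C i) (of_nat n) = 0" if "i < J" for i n using C0 that by simp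
  have c0: "vv 0 n = zz n * poly (a 0) (of_nat n) - poly p (of_nat n)" if "n \<ge> N0" for n
  proof -
    define x :: 'a where "x = of_nat n"
    have nz: "poly D x \<noteq> 0" "poly D (x + 1) \<noteq> 0" "poly A x \<noteq> 0"
      using N0[of n] N0[of "Suc n"] that by (auto simp: ac_simps x_def)
    have R: "poly (C 0) x = - (poly p x * poly D x * poly D (x + 1) * poly A x)
        - poly (W 0) x * poly D (x + 1) * poly A x - poly (W J0) (x + 1) * poly D x * poly (a 0) x"
      by (simp add: C_def)
    have "poly (C 0) x = 0" using Cn J0 by (simp add: x_def)
    moreover have "vv 0 n - (zz n * poly (a 0) (of_nat n) - poly p (of_nat n)) =
        - poly (C 0) x / (poly D x * poly D (x + 1) * poly A x)"
      unfolding R vv_def zz_def N_def E_def x_def[symmetric] using nz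
      by (simp add: field_simps)
    ultimately show ?thesis by simp
  qed
  have ci: "vv i n = vv (i - 1) (Suc n) + zz n * poly (a i) (of_nat n)" if "n \<ge> N0" "0 < i" "i < J" for i n
  proof -
    define x :: 'a where "x = of_nat n"
    have nz: "poly D x \<noteq> 0" "poly D (x + 1) \<noteq> 0" "poly A x \<noteq> 0"
      using N0[of n] N0[of "Suc n"] that by (auto simp: ac_simps x_def)
    have R: "poly (C i) x = poly (W (i - 1)) (x + 1) * poly D x * poly A x
        - poly (W i) x * poly D (x + 1) * poly A x - poly (W J0) (x + 1) * poly D x * poly (a i) x"
      using that by (simp add: C_def)
    have sx: "(of_nat (Suc n) :: 'a) = x + 1" by (simp add: x_def)
    have "poly (C i) x = 0" using Cn that by (simp add: x_def)
    moreover have "vv i n - (vv (i - 1) (Suc n) + zz n * poly (a i) (of_nat n)) =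
        - poly (C i) x / (poly D x * poly D (x + 1) * poly A x)"
      unfolding R vv_def zz_def N_def E_def sx x_def[symmetric] using nz
      by (simp add: field_simps)
    ultimately show ?thesis by simp
  qed
  have cJ: "vv J0 (Suc n) = - zz n * poly (a J) (of_nat n)" if "n \<ge> N0" for n
  proof -
    have nz: "poly D (of_nat n) \<noteq> 0" "poly D (of_nat n + 1) \<noteq> 0" "poly A (of_nat n) \<noteq> 0"
      using N0[of n] N0[of "Suc n"] that by (auto simp: ac_simps)
    then show ?thesis unfolding vv_def zz_def N_def E_def A_def
      by (simp add: field_simps A_def)
  qed
  have IND: "vv i n = (\<Sum>l\<le>i. zz (n + i - l) * poly (a l) (of_nat (n + i - l))) - poly p (of_nat (n + i))"
    if "i < J" "n \<ge> N0" for i n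
    using that
  proof (induction i arbitrary: n)
    case 0 then show ?case using c0 by simp
  next
    case (Suc i)
    have eqn: "Suc n + i = n + Suc i" by simp
    have e2: "n + Suc i - Suc i = n" by simp
    have "vv (Suc i) n = vv i (Suc n) + zz n * poly (a (Suc i)) (of_nat n)"
      using ci[of n "Suc i"] Suc.prems by simp
    also have "vv i (Suc n) = (\<Sum>l\<le>i. zz (n + Suc i - l) * poly (a l) (of_nat (n + Suc i - l))) - poly p (of_nat (n + Suc i))"
      using Suc.IH[of "Suc n"] Suc.prems unfolding eqn by simp
    also have "(\<Sum>l\<le>i. zz (n + Suc i - l) * poly (a l) (of_nat (n + Suc i - l))) - poly p (of_nat (n + Suc i))
        + zz n * poly (a (Suc i)) (of_nat n) =
        (\<Sum>l\<le>Suc i. zz (n + Suc i - l) * poly (a l) (of_nat (n + Suc i - l))) - poly p (of_nat (n + Suc i))"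
      by (simp only: sum.atMost_Suc e2 diff_add_eq)
    finally show ?case .
  qed
  have fin: "poly p (of_nat (n + J)) = (\<Sum>l\<le>J. zz (n + J - l) * poly (a l) (of_nat (n + J - l)))"
    if "n \<ge> N0" for n
  proof -
    have "vv J0 (Suc n) = (\<Sum>l\<le>J0. zz (Suc n + J0 - l) * poly (a l) (of_nat (Suc n + J0 - l))) - poly p (of_nat (Suc n + J0))"
      using IND[of J0 "Suc n"] that J0def by simp
    with cJ[OF that] show ?thesis unfolding J0def by (simp add: algebra_simps Suc_diff_le)
  qed
  have "\<forall>\<^sub>F m in sequentially. (\<forall>l\<le>J. poly E (of_nat m - of_nat l) \<noteq> 0) \<and>
     poly p (of_nat m) = (\<Sum>l\<le>J. poly (a l) (of_nat m - of_nat l) *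
        (poly N (of_nat m - of_nat l) / poly E (of_nat m - of_nat l)))"
    unfolding eventually_sequentially
  proof (intro exI[of _ "N0 + J"] allI impI)
    fix m assume m: "N0 + J \<le> m"
    have Enz: "poly E (of_nat k) \<noteq> 0" if "k \<ge> N0" for k
      using N0[of k] N0[of "Suc k"] that by (simp add: E_def ac_simps)
    have conv: "(of_nat m - of_nat l :: 'a) = of_nat (m - l)" if "l \<le> J" for l
      using that m by (simp add: of_nat_diff)
    show "(\<forall>l\<le>J. poly E (of_nat m - of_nat l) \<noteq> 0) \<and>
     poly p (of_nat m) = (\<Sum>l\<le>J. poly (a l) (of_nat m - of_nat l) *
        (poly N (of_nat m - of_nat l) / poly E (of_nat m - of_nat l)))"
    proof
      show "\<forall>l\<le>J. poly E (of_nat m - of_nat l) \<noteq> 0"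
      proof (intro allI impI)
        fix l assume l: "l \<le> J"
        have "poly E (of_nat (m - l)) \<noteq> 0" using l m by (intro Enz) simp
        then show "poly E (of_nat m - of_nat l) \<noteq> 0" using conv[OF l] by simp
      qed
      have "poly p (of_nat m) = poly p (of_nat (m - J + J))" using m by simp
      also have "\<dots> = (\<Sum>l\<le>J. zz (m - J + J - l) * poly (a l) (of_nat (m - J + J - l)))"
        using m by (intro fin) simp
      also have "\<dots> = (\<Sum>l\<le>J. poly (a l) (of_nat m - of_nat l) *
        (poly N (of_nat m - of_nat l) / poly E (of_nat m - of_nat l)))"
        using m conv by (intro sum.cong refl) (simp add: zz_def)
      finally show "poly p (of_nat m) = (\<Sum>l\<le>J. poly (a l) (of_nat m - of_nat l) *
        (poly N (of_nat m - of_nat l) / poly E (of_nat m - of_nat l)))" .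
    qed
  qed
  with E0 show ?thesis by blast
qed

lemma smult_sum_right: "smult c (sum f A) = (\<Sum>i\<in>A. smult c (f i))"
  by (induct A rule: infinite_finite_induct) (auto simp: smult_add_right)


theorem theorem2p6:
  fixes F :: "nat \<Rightarrow> 'a::field_char_0" and J :: nat and a :: "nat \<Rightarrow> 'a poly" and p :: "'a poly"
  assumes "holonomic F" and "hol_order F = J" and "J > 0"
    and "annihilates J a F" and "a 0 \<noteq> 0" and "a J \<noteq> 0"
    and "\<forall>h::nat. coprime (a 0) (pcompose (a J) [:of_nat h, 1:])"
    and "nondegenerated J a"
    and "p \<noteq> 0" and "summable_seq (\<lambda>n. poly p (of_nat n) * F n)"
  shows "int (degree p) \<ge> deg_op J a + int (cont_zero_index J a)"
proof -
  obtain N E where "E \<noteq> 0" and ev: "\<forall>\<^sub>F m in sequentially. (\<forall>l\<le>J. poly E (of_nat m - of_nat l) \<noteq> 0) \<and>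
     poly p (of_nat m) = (\<Sum>l\<le>J. poly (a l) (of_nat m - of_nat l) *
        (poly N (of_nat m - of_nat l) / poly E (of_nat m - of_nat l)))"
    using L_derive[OF assms(2,3,4,6,9,10)] by blast
  obtain N' E' where E': "E' \<noteq> 0" "coprime N' E'" and id: "p * (\<Prod>l\<le>J. shiftp E' (- of_nat l)) =
     (\<Sum>l\<le>J. shiftp (a l * N') (- of_nat l) * (\<Prod>j\<in>{..J}-{l}. shiftp E' (- of_nat j)))"
    using L_reduce[OF \<open>E \<noteq> 0\<close> ev] by blast
  have "degree E' = 0" using L_den[OF assms(3) E' assms(7) id] .
  then obtain c where c: "E' = [:c:]" by (metis degree_eq_zeroE)
  with E' have "c \<noteq> 0" by auto
  have "p * [:c ^ Suc J:] = (\<Sum>l\<le>J. shiftp (a l * N') (- of_nat l) * [:c ^ J:])"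
    using id unfolding c by (simp add: poly_const_pow mult.commute[of "c ^ J" c])
  then have "smult (c ^ Suc J) p = smult (c ^ J) (\<Sum>l\<le>J. shiftp (a l * N') (- of_nat l))"
    by (simp add: sum_distrib_right smult_sum_right)
  then have eq3: "smult (c ^ J) (smult c p) = smult (c ^ J) (\<Sum>l\<le>J. shiftp (a l * N') (- of_nat l))"
    by (simp add: mult.commute[of "c ^ J" c])
  have eq4: "smult c p = (\<Sum>l\<le>J. shiftp (a l * N') (- of_nat l))"
    using smult_cancel[OF _ eq3] \<open>c \<noteq> 0\<close> by simp
  have "p = smult (inverse c) (smult c p)" using \<open>c \<noteq> 0\<close> by simp
  also have "\<dots> = smult (inverse c) (\<Sum>l\<le>J. shiftp (a l * N') (- of_nat l))" by (simp only: eq4)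
  also have "\<dots> = (\<Sum>l\<le>J. shiftp (a l * smult (inverse c) N') (- of_nat l))"
    by (simp add: smult_sum_right shiftp_def pcompose_smult)
  finally have "deg_op J a \<le> int (degree p)" using L_deg[OF assms(8,9)] by blast
  then show ?thesis using cont_zero_index_0[OF assms(8)] by simp
qed


end
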